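(* Consider a deterministic MDP with finite state space $\mathcal{S}$, finite action space $\mathcal{A}$, deterministic transition $f$, reward $r$, initial state distribution $\mu$, and KL-regularization coefficient $\beta>0$. Let $\pi_{\mathrm{ref}}$ be a reference policy with $\pi_{\mathrm{ref}}(a|s)>0$ for all $s\in\mathcal{S},a\in\mathcal{A}$. Let $\nu_{\mathcal{S}}\in\Delta(\mathcal{S})$ and, for each $s$, $\nu_{\mathcal{A}}(\cdot|s)\in\Delta(\mathcal{A})$ be exploratory, i.e. $\nu_{\mathcal{S}}(s)>0$ and $\nu_{\mathcal{A}}(a|s)>0$ for all $s,a$. Let $\pi^+$ be the solution of $$\min_{\pi\in\Pi}\ \frac12\,\mathbb{E}_{s\sim\nu_{\mathcal{S}}}\mathbb{E}_{a\sim\nu_{\mathcal{A}}(\cdot|s)}\left[\left(\frac1\beta A^{\pi_{\mathrm{ref}}}(s,a)-\log\frac{\pi(a|s)}{\pi_{\mathrm{ref}}(a|s)}\right)^2\right],$$ where $\Pi$ is the set of all policies. Then for every state $s\in\mathcal{S}$ there exists a function $\lambda_s:\Delta(\mathcal{A})\to[0,+\infty)$ such that $$V_\beta^{\pi^+}(\mu)-V_\beta^{\pi_{\mathrm{ref}}}(\mu)\ \ge\ \mathbb{E}_\mu^{\pi^+}\big[\lambda_s(\nu_{\mathcal{A}}(\cdot|s))\big]\ \ge\ 0,$$ and equality holds if and only if $\pi_{\mathrm{ref}}=\pi^*_\beta$.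
   Context: The MDP is deterministic: $s_{t+1}=f(s_t,a_t)$, episodes terminate after a finite (possibly random) number $T$ of steps at a terminal state, and the reward is nonzero only on reaching a terminal state. A policy $\pi$ assigns to each state a distribution $\pi(\cdot|s)\in\Delta(\mathcal{A})$. Unregularized value: $V^\pi(s)=\mathbb{E}[\sum_{t=0}^{T-1} r(s_t,a_t)\mid s_0=s]$ with $a_t\sim\pi(\cdot|s_t)$; $Q^\pi(s,a)=r(s,a)+V^\pi(f(s,a))$; advantage $A^\pi(s,a)=Q^\pi(s,a)-V^\pi(s)$. KL-regularized value: $V_\beta^\pi(s)=\mathbb{E}\big[\sum_{t=0}^{T-1}\big(r(s_t,a_t)-\beta\log\frac{\pi(a_t|s_t)}{\pi_{\mathrm{ref}}(a_t|s_t)}\big)\mid s_0=s\big]$, and $V_\beta^\pi(\mu)=\mathbb{E}_{s\sim\mu}V_\beta^\pi(s)$. $\pi^*_\beta$ denotes the optimal policy maximizing $V_\beta^\pi$. For a function $g$ of states, $\mathbb{E}_\mu^\pi[g(s)]$ denotes $\mathbb{E}[\sum_{t=0}^{T-1} g(s_t)]$ over trajectories with $s_0\sim\mu$, $a_t\sim\pi(\cdot|s_t)$, $s_{t+1}=f(s_t,a_t)$ (the expectation over states visited by $\pi$ from $\mu$). *)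

theory Defs
  imports Complex_Main
begin

definition is_dist :: "('x::finite \<Rightarrow> real) \<Rightarrow> bool" where
  "is_dist p \<longleftrightarrow> (\<forall>x. 0 \<le> p x) \<and> (\<Sum>x\<in>UNIV. p x) = 1"

definition is_policy :: "('s \<Rightarrow> 'a::finite \<Rightarrow> real) \<Rightarrow> bool" where
  "is_policy pol \<longleftrightarrow> (\<forall>s. is_dist (pol s))"

primrec run :: "('s \<Rightarrow> 'a \<Rightarrow> 's) \<Rightarrow> 's \<Rightarrow> (nat \<Rightarrow> 'a) \<Rightarrow> nat \<Rightarrow> 's" where
  "run f s acts 0 = s"
| "run f s acts (Suc n) = f (run f s acts n) (acts n)"

definition terminates_within :: "('s \<Rightarrow> 'a \<Rightarrow> 's) \<Rightarrow> 's set \<Rightarrow> nat \<Rightarrow> bool" where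
  "terminates_within f Term H \<longleftrightarrow> (\<forall>s acts. \<exists>n\<le>H. run f s acts n \<in> Term)"

(* KL-regularized value computed with n steps of look-ahead
   (exact once n is at least the termination bound); beta = 0 gives the unregularized value *)
primrec Vn :: "('s \<Rightarrow> 'a \<Rightarrow> 's) \<Rightarrow> 's set \<Rightarrow> ('s \<Rightarrow> 'a \<Rightarrow> real) \<Rightarrow> real
    \<Rightarrow> ('s \<Rightarrow> 'a::finite \<Rightarrow> real) \<Rightarrow> ('s \<Rightarrow> 'a \<Rightarrow> real) \<Rightarrow> nat \<Rightarrow> 's \<Rightarrow> real" where
  "Vn f Term r beta piref pol 0 s = 0"
| "Vn f Term r beta piref pol (Suc n) s =
     (if s \<in> Term then 0 else
      (\<Sum>a\<in>UNIV. pol s a * (r s a - beta * ln (pol s a / piref s a)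
                              + Vn f Term r beta piref pol n (f s a))))"

definition Vreg where
  "Vreg f Term H r beta piref pol s = Vn f Term r beta piref pol H s"

definition Vreg_mu where
  "Vreg_mu f Term H r beta piref pol mu = (\<Sum>s\<in>UNIV. mu s * Vreg f Term H r beta piref pol s)"

definition Vunreg where
  "Vunreg f Term H r pol s = Vreg f Term H r 0 pol pol s"

definition Qfun where
  "Qfun f Term H r pol s a = r s a + Vunreg f Term H r pol (f s a)"

definition Adv where
  "Adv f Term H r pol s a = Qfun f Term H r pol s a - Vunreg f Term H r pol s"

(* expected sum of g over the (non-terminal) states s_0, ..., s_{T-1} visited by pol *)
primrec Occn :: "('s \<Rightarrow> 'a \<Rightarrow> 's) \<Rightarrow> 's set \<Rightarrow> ('s \<Rightarrow> 'a::finite \<Rightarrow> real)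
    \<Rightarrow> ('s \<Rightarrow> real) \<Rightarrow> nat \<Rightarrow> 's \<Rightarrow> real" where
  "Occn f Term pol g 0 s = 0"
| "Occn f Term pol g (Suc n) s =
     (if s \<in> Term then 0 else g s + (\<Sum>a\<in>UNIV. pol s a * Occn f Term pol g n (f s a)))"

definition visit_exp where
  "visit_exp f Term H pol mu g = (\<Sum>s\<in>UNIV. mu s * Occn f Term pol g H s)"

definition loss where
  "loss f Term H r beta piref nuS nuA pol =
     1/2 * (\<Sum>s\<in>UNIV. nuS s * (\<Sum>a\<in>UNIV. nuA s a *
        (1/beta * Adv f Term H r piref s a - ln (pol s a / piref s a))\<^sup>2))"

end

theory Submission imports Defs begin

definition reach where "reach f T k s \<longleftrightarrow> (\<forall>acts. \<exists>n\<le>k. run f s acts n \<in> T)"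

lemma run_shift: "run f s (case_nat a acts) (Suc n) = run f (f s a) acts n"
  by (induction n) auto

lemma reach_succ: assumes "reach f T (Suc k) s" "s \<notin> T" shows "reach f T k (f s a)"
  unfolding reach_def
proof
  fix acts
  obtain n where n: "n \<le> Suc k" "run f s (case_nat a acts) n \<in> T"
    using assms(1) unfolding reach_def by blast
  then obtain m where "n = Suc m" using assms(2) by (cases n) auto
  then show "\<exists>n\<le>k. run f (f s a) acts n \<in> T" using n run_shift[of f s a acts m] by auto
qed

lemma reach0: "reach f T 0 s \<Longrightarrow> s \<in> T"
  unfolding reach_def by (metis le_zero_eq run.simps(1))

lemma Vn_stable: "reach f T k s \<Longrightarrow> k \<le> n \<Longrightarrow> Vn f T r \<beta> pr pol n s = Vn f T r \<beta> pr pol k s"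
proof (induction k arbitrary: s n)
  case 0
  then show ?case using reach0[OF 0(1)] by (cases n) auto
next
  case (Suc k)
  then obtain m where m: "n = Suc m" "k \<le> m" by (cases n) auto
  show ?case
  proof (cases "s \<in> T")
    case True then show ?thesis using m by simp
  next
    case False
    have "Vn f T r \<beta> pr pol m (f s a) = Vn f T r \<beta> pr pol k (f s a)" for a
      using Suc.IH[OF reach_succ[OF Suc.prems(1) False] m(2)] .
    then show ?thesis using m False by simp
  qed
qed

lemma ln_self: "ln ((x::real) / x) = 0" by (cases "x = 0") auto

lemma Vn_ref0: "Vn f T r \<beta> pr pr n s = Vn f T r 0 pr pr n s"
  by (induction n arbitrary: s) (auto intro!: sum.cong)

lemma exp_eq_imp: assumes "exp (x::real) = 1 + x" shows "x = 0"
proof (rule ccontr)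
  assume nz: "x \<noteq> 0"
  show False
  proof (cases "1 + x/2 < 0")
    case True then show ?thesis using assms exp_gt_zero[of x] by linarith
  next
    case False
    have "(1 + x/2)^2 \<le> exp (x/2) ^ 2"
      using False by (intro power_mono) auto
    also have "\<dots> = exp x" by (simp add: exp_double[symmetric] power2_eq_square flip: exp_add)
    finally have "(1 + x/2)^2 \<le> exp x" .
    moreover have "(1 + x/2)^2 = 1 + x + x^2/4" by (simp add: power2_eq_square field_simps)
    moreover have "x^2 > 0" using nz by simp
    ultimately show False using assms by simp
  qed
qed

lemma Occn_cong: "(\<And>s. s \<notin> T \<Longrightarrow> g1 s = g2 s) \<Longrightarrow> Occn f T pol g1 n s = Occn f T pol g2 n s"
  by (induction n arbitrary: s) auto

lemma Occn_nonneg: "(\<And>s. s \<notin> T \<Longrightarrow> g s \<ge> 0) \<Longrightarrow> (\<And>s a. pol s a \<ge> 0) \<Longrightarrow> Occn f T pol g n s \<ge> 0"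
  by (induction n arbitrary: s) (auto intro!: sum_nonneg add_nonneg_nonneg)

lemma Occn_zero:
  assumes g: "\<And>s. s \<notin> T \<Longrightarrow> g s \<ge> 0" and pp: "\<And>s a. pp s a > 0"
    and gp: "\<And>s. s \<notin> T \<Longrightarrow> g s = 0 \<Longrightarrow> gp s \<le> 0" and pol: "\<And>s a. pol s a \<ge> 0"
  shows "Occn f T pp g n s = 0 \<Longrightarrow> Occn f T pol gp n s \<le> 0"
proof (induction n arbitrary: s)
  case 0 then show ?case by simp
next
  case (Suc n)
  show ?case
  proof (cases "s \<in> T")
    case True then show ?thesis by simp
  next
    case False
    have nn: "\<And>a. pp s a * Occn f T pp g n (f s a) \<ge> 0"
      using Occn_nonneg[of T g pp] g pp by (simp add: less_imp_le)
    have eq: "g s + (\<Sum>a\<in>UNIV. pp s a * Occn f T pp g n (f s a)) = 0" using Suc.prems False by simp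
    have "(\<Sum>a\<in>UNIV. pp s a * Occn f T pp g n (f s a)) \<ge> 0" using nn by (simp add: sum_nonneg)
    then have gs: "g s = 0" and s0: "(\<Sum>a\<in>UNIV. pp s a * Occn f T pp g n (f s a)) = 0"
      using eq g[OF False] by linarith+
    have "\<forall>a\<in>UNIV. pp s a * Occn f T pp g n (f s a) = 0"
      using s0 nn by (subst sum_nonneg_eq_0_iff[symmetric]) auto
    then have "Occn f T pp g n (f s a) = 0" for a using pp[of s a] by (metis UNIV_I mult_eq_0_iff order_less_irrefl)
    then have "Occn f T pol gp n (f s a) \<le> 0" for a using Suc.IH by blast
    then have "(\<Sum>a\<in>UNIV. pol s a * Occn f T pol gp n (f s a)) \<le> 0"
      using pol by (intro sum_nonpos) (simp add: mult_nonneg_nonpos)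
    then show ?thesis using False gp[OF False gs] by simp
  qed
qed

locale mdp =
  fixes f :: "'s::finite \<Rightarrow> 'a::finite \<Rightarrow> 's" and T :: "'s set" and H :: nat
    and r :: "'s \<Rightarrow> 'a \<Rightarrow> real" and beta :: real and piref :: "'s \<Rightarrow> 'a \<Rightarrow> real"
  assumes hterm: "terminates_within f T H" and hbeta: "beta > 0"
    and pr_pol: "is_policy piref" and pr_pos: "\<forall>s a. piref s a > 0"
begin

abbreviation V where "V \<equiv> Vn f T r 0 piref piref H"
abbreviation A where "A \<equiv> Adv f T H r piref"

lemma reachH: "reach f T H s" using hterm unfolding terminates_within_def reach_def by blast

lemma pol_sum: "is_policy pol \<Longrightarrow> (\<Sum>a\<in>UNIV. pol s a) = 1"
  unfolding is_policy_def is_dist_def by blast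

lemma pol_nn: "is_policy pol \<Longrightarrow> pol s a \<ge> 0"
  unfolding is_policy_def is_dist_def by blast

lemma A_eq: "A s a = r s a + V (f s a) - V s"
  unfolding Adv_def Qfun_def Vunreg_def Vreg_def ..

lemma V_step: assumes "s \<notin> T" shows "V s = (\<Sum>a\<in>UNIV. piref s a * (r s a + V (f s a)))"
proof -
  obtain m where m: "H = Suc m" using reachH[of s] reach0[of f T s] assms by (cases H) auto
  have e: "Vn f T r 0 piref piref m (f s a) = V (f s a)" for a
    by (simp only: m) (rule sym, rule Vn_stable[OF reach_succ[OF reachH[of s, unfolded m] assms]], simp)
  have "V s = (\<Sum>a\<in>UNIV. piref s a * (r s a + Vn f T r 0 piref piref m (f s a)))"
    unfolding m using assms by simp
  then show ?thesis by (simp only: e)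
qed

lemma A_sum0: assumes "s \<notin> T" shows "(\<Sum>a\<in>UNIV. piref s a * A s a) = 0"
proof -
  have "(\<Sum>a\<in>UNIV. piref s a * A s a) = (\<Sum>a\<in>UNIV. piref s a * (r s a + V (f s a))) - (\<Sum>a\<in>UNIV. piref s a) * V s"
    by (simp add: A_eq algebra_simps sum_subtractf sum_distrib_right)
  then show ?thesis using V_step[OF assms] pol_sum[OF pr_pol] by simp
qed

definition gfun where
  "gfun pol s = (\<Sum>a\<in>UNIV. pol s a * (A s a - beta * ln (pol s a / piref s a)))"

lemma PDL: "is_policy pol \<Longrightarrow> k \<le> H \<Longrightarrow> reach f T k s \<Longrightarrow>
   Vn f T r beta piref pol k s - Vn f T r beta piref piref k s = Occn f T pol (gfun pol) k s"
proof (induction k arbitrary: s)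
  case 0 then show ?case by simp
next
  case (Suc k)
  show ?case
  proof (cases "s \<in> T")
    case True then show ?thesis by simp
  next
    case False
    have R: "reach f T k (f s a)" for a using reach_succ[OF Suc.prems(3) False] .
    have Vr1: "Vn f T r beta piref piref (Suc k) s = V s"
      using Vn_stable[OF Suc.prems(3) Suc.prems(2), of r beta piref piref] Vn_ref0 by metis
    have Vr2: "Vn f T r beta piref piref k (f s a) = V (f s a)" for a
      using Vn_stable[OF R, of H r beta piref piref] Suc.prems(2) Vn_ref0 by (metis Suc_leD)
    have IH: "Vn f T r beta piref pol k (f s a) = V (f s a) + Occn f T pol (gfun pol) k (f s a)" for a
      using Suc.IH[OF Suc.prems(1) _ R, of a] Suc.prems(2) Vr2[of a] by simp
    have "Vn f T r beta piref pol (Suc k) s - Vn f T r beta piref piref (Suc k) s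
      = (\<Sum>a\<in>UNIV. pol s a * (r s a - beta * ln (pol s a / piref s a) + V (f s a)
            + Occn f T pol (gfun pol) k (f s a))) - V s"
      using False Vr1 IH by (simp add: add.assoc)
    also have "\<dots> = (\<Sum>a\<in>UNIV. pol s a * (A s a - beta * ln (pol s a / piref s a))
          + pol s a * Occn f T pol (gfun pol) k (f s a)) + (\<Sum>a\<in>UNIV. pol s a) * V s - V s"
      by (simp add: A_eq algebra_simps sum.distrib sum_distrib_right sum_subtractf)
    also have "\<dots> = Occn f T pol (gfun pol) (Suc k) s"
      using False pol_sum[OF Suc.prems(1)] by (simp add: gfun_def sum.distrib)
    finally show ?thesis .
  qed
qed

end

context mdp begin

lemma lagrange:
  fixes nuS :: "'s \<Rightarrow> real" and nuA pp :: "'s \<Rightarrow> 'a \<Rightarrow> real"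
  assumes pp: "\<forall>s a. pp s a > 0" "is_policy pp" and nuS: "\<forall>s. nuS s > 0"
    and minc: "\<forall>pol. is_policy pol \<and> (\<forall>s a. pol s a > 0) \<longrightarrow>
           loss f T H r beta piref nuS nuA pp \<le> loss f T H r beta piref nuS nuA pol"
    and bc: "b \<noteq> c"
  shows "nuA s b * (1/beta * A s b - ln (pp s b / piref s b)) / pp s b
       = nuA s c * (1/beta * A s c - ln (pp s c / piref s c)) / pp s c"
proof -
  define \<delta> where "\<delta> s' a = (if s' = s then (if a = b then 1 else 0) - (if a = c then 1 else (0::real)) else 0)" for s' a
  define pt where "pt t = (\<lambda>s' a. pp s' a + t * \<delta> s' a)" for t
  define Y where "Y s' a = 1/beta * A s' a" for s' a
  define W where "W s' a = Y s' a - ln (pp s' a / piref s' a)" for s' a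
  define G where "G a = nuA s a * W s a / pp s a" for a
  define \<phi> where "\<phi> t = loss f T H r beta piref nuS nuA (pt t)" for t
  have \<phi>_eq: "\<phi> = (\<lambda>t. 1/2 * (\<Sum>s'\<in>UNIV. nuS s' * (\<Sum>a\<in>UNIV. nuA s' a *
        (Y s' a - ln ((pp s' a + t * \<delta> s' a) / piref s' a))\<^sup>2)))"
    unfolding \<phi>_def loss_def pt_def Y_def by simp
  have d1: "((\<lambda>t. (Y s' a - ln ((pp s' a + t * \<delta> s' a) / piref s' a))\<^sup>2) has_real_derivative
       2 * W s' a * (- (\<delta> s' a / pp s' a))) (at 0)" for s' a
  proof -
    have p: "pp s' a > 0" "piref s' a > 0" using pp pr_pos by auto
    show ?thesis using p
      by (auto intro!: derivative_eq_intros simp: W_def field_simps)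
  qed
  have D: "(\<phi> has_real_derivative 1/2 * (\<Sum>s'\<in>UNIV. nuS s' * (\<Sum>a\<in>UNIV. nuA s' a *
        (2 * W s' a * (- (\<delta> s' a / pp s' a)))))) (at 0)"
    unfolding \<phi>_eq by (intro DERIV_cmult DERIV_sum d1)
  define d where "d = min (pp s b) (pp s c)"
  have dpos: "d > 0" using pp unfolding d_def by auto
  have pt0: "pt 0 = pp" unfolding pt_def by simp
  have ptpos: "pt t s' a > 0" if "\<bar>t\<bar> < d" for t s' a
    using that pp bc unfolding pt_def \<delta>_def d_def by (auto simp: abs_less_iff)
  have dsum: "(\<Sum>a\<in>UNIV. \<delta> s' a) = 0" for s'
    unfolding \<delta>_def by (cases "s' = s") (simp_all add: sum_subtractf)
  have ptpol: "is_policy (pt t)" if "\<bar>t\<bar> < d" for t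
  proof -
    have "(\<Sum>a\<in>UNIV. pt t s' a) = 1" for s'
      unfolding pt_def using pol_sum[OF pp(2), of s'] dsum[of s']
      by (simp add: sum.distrib sum_distrib_left[symmetric])
    then show ?thesis unfolding is_policy_def is_dist_def using ptpos[OF that] by (auto intro: less_imp_le)
  qed
  have lm: "\<forall>t. \<bar>0 - t\<bar> < d \<longrightarrow> \<phi> 0 \<le> \<phi> t"
    using minc ptpol ptpos unfolding \<phi>_def pt0 by auto
  have Z: "1/2 * (\<Sum>s'\<in>UNIV. nuS s' * (\<Sum>a\<in>UNIV. nuA s' a *
        (2 * W s' a * (- (\<delta> s' a / pp s' a))))) = 0"
    using DERIV_local_min[OF D dpos lm] .
  have inner: "(\<Sum>a\<in>UNIV. nuA s' a * (2 * W s' a * (- (\<delta> s' a / pp s' a))))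
      = (if s' = s then 2 * (G c - G b) else 0)" for s'
  proof (cases "s' = s")
    case True
    have "nuA s' a * (2 * W s' a * (- (\<delta> s' a / pp s' a)))
        = (if a = c then 2 * G a else 0) - (if a = b then 2 * G a else 0)" for a
      using True bc unfolding \<delta>_def G_def by auto
    then show ?thesis using True by (simp add: sum_subtractf)
  next
    case False then show ?thesis unfolding \<delta>_def by simp
  qed
  have "(\<lambda>s'. nuS s' * (if s' = s then 2 * (G c - G b) else 0)) = (\<lambda>s'. if s' = s then nuS s * (2 * (G c - G b)) else 0)"
    by auto
  then have "(\<Sum>s'\<in>UNIV. nuS s' * (\<Sum>a\<in>UNIV. nuA s' a *
        (2 * W s' a * (- (\<delta> s' a / pp s' a))))) = (\<Sum>s'\<in>UNIV. if s' = s then nuS s * (2 * (G c - G b)) else 0)"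
    by (simp only: inner)
  also have "\<dots> = nuS s * (2 * (G c - G b))" by simp
  finally have "nuS s * (2 * (G c - G b)) = 0" using Z by simp
  then have "G b = G c" using nuS[rule_format, of s] by auto
  then show ?thesis unfolding G_def W_def Y_def .
qed


lemma state_analysis:
  fixes nuS :: "'s \<Rightarrow> real" and nuA pp :: "'s \<Rightarrow> 'a \<Rightarrow> real"
  assumes pp: "\<forall>s a. pp s a > 0" "is_policy pp" and nuS: "\<forall>s. nuS s > 0"
    and minc: "\<forall>pol. is_policy pol \<and> (\<forall>s a. pol s a > 0) \<longrightarrow>
           loss f T H r beta piref nuS nuA pp \<le> loss f T H r beta piref nuS nuA pol"
    and nuA: "\<forall>s a. nuA s a > 0" and s: "s \<notin> T"
  shows "gfun pp s \<ge> 0 \<and> (gfun pp s = 0 \<longrightarrow> (\<forall>a. A s a = 0))"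
proof -
  define w where "w a = 1/beta * A s a - ln (pp s a / piref s a)" for a
  define a0 where "a0 = (undefined::'a)"
  define lam where "lam = nuA s a0 * w a0 / pp s a0"
  have pos: "pp s a > 0" "nuA s a > 0" "piref s a > 0" for a using pp nuA pr_pos by auto
  have G: "nuA s a * w a / pp s a = lam" for a
    using lagrange[OF pp nuS minc, of a a0 s] unfolding lam_def w_def by (cases "a = a0") auto
  have wa: "w a = lam * pp s a / nuA s a" for a
    unfolding G[of a, symmetric] using pos[of a] by (simp add: field_simps)
  have t1: "pp s a * (A s a - beta * ln (pp s a / piref s a)) = beta * (lam * (pp s a ^ 2 / nuA s a))" for a
  proof -
    have "A s a - beta * ln (pp s a / piref s a) = beta * w a" unfolding w_def using hbeta by (simp add: field_simps)
    also have "\<dots> = beta * (lam * pp s a / nuA s a)" using wa[of a] by simp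
    finally have e: "A s a - beta * ln (pp s a / piref s a) = beta * (lam * pp s a / nuA s a)" .
    have "pp s a * (beta * (lam * pp s a / nuA s a)) = beta * (lam * (pp s a ^ 2 / nuA s a))"
      by (simp add: power2_eq_square)
    then show ?thesis using e by simp
  qed
  have gf: "gfun pp s = beta * (lam * (\<Sum>a\<in>UNIV. pp s a ^ 2 / nuA s a))"
    unfolding gfun_def t1 by (simp add: sum_distrib_left)
  have Spos: "(\<Sum>a\<in>UNIV. pp s a ^ 2 / nuA s a) > 0"
  proof -
    have "(pp s a)^2 / nuA s a > 0" for a using pos(1)[of a] pos(2)[of a] by (metis divide_pos_pos zero_less_power)
    then show ?thesis by (intro sum_pos) auto
  qed
  have psum: "(\<Sum>a\<in>UNIV. piref s a) = 1" "(\<Sum>a\<in>UNIV. pp s a) = 1"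
    using pol_sum[OF pr_pol] pol_sum[OF pp(2)] by auto
  have lin: "(\<Sum>a\<in>UNIV. piref s a * (1 + 1/beta * A s a)) = 1"
  proof -
    have "(\<Sum>a\<in>UNIV. piref s a * (1 + 1/beta * A s a)) = (\<Sum>a\<in>UNIV. piref s a) + 1/beta * (\<Sum>a\<in>UNIV. piref s a * A s a)"
      by (simp add: algebra_simps sum.distrib sum_distrib_left)
    then show ?thesis using A_sum0[OF s] psum by simp
  qed
  have jen: "(\<Sum>a\<in>UNIV. piref s a * exp (1/beta * A s a)) \<ge> 1"
  proof -
    have "(\<Sum>a\<in>UNIV. piref s a * (1 + 1/beta * A s a)) \<le> (\<Sum>a\<in>UNIV. piref s a * exp (1/beta * A s a))"
      using pos by (intro sum_mono mult_left_mono) (auto intro: less_imp_le)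
    then show ?thesis using lin by simp
  qed
  have ex: "piref s a * exp (ln (pp s a / piref s a)) = pp s a" for a using pos[of a] by simp
  have lam0: "lam \<ge> 0"
  proof (rule ccontr)
    assume "\<not> lam \<ge> 0"
    then have "w a < 0" for a unfolding wa using pos[of a] by (simp add: divide_neg_pos mult_neg_pos)
    then have "piref s a * exp (1/beta * A s a) < pp s a" for a
    proof -
      have "1/beta * A s a < ln (pp s a / piref s a)" using \<open>w a < 0\<close> unfolding w_def by simp
      then have "exp (1/beta * A s a) < exp (ln (pp s a / piref s a))" by simp
      then have "piref s a * exp (1/beta * A s a) < piref s a * exp (ln (pp s a / piref s a))"
        using pos(3)[of a] by simp
      then show ?thesis using ex[of a] by simp
    qed
    then have "(\<Sum>a\<in>UNIV. piref s a * exp (1/beta * A s a)) < (\<Sum>a\<in>UNIV. pp s a)"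
      by (intro sum_strict_mono) auto
    then show False using jen psum by simp
  qed
  have "gfun pp s \<ge> 0" unfolding gf using hbeta lam0 Spos by simp
  moreover have "\<forall>a. A s a = 0" if g0: "gfun pp s = 0"
  proof
    fix a
    have "lam = 0" using g0 hbeta Spos unfolding gf by simp
    then have "w b = 0" for b unfolding wa by simp
    then have eqp: "piref s b * exp (1/beta * A s b) = pp s b" for b
      using ex[of b] unfolding w_def by simp
    have "(\<Sum>b\<in>UNIV. piref s b * (exp (1/beta * A s b) - (1 + 1/beta * A s b))) = 
       (\<Sum>b\<in>UNIV. piref s b * exp (1/beta * A s b)) - (\<Sum>b\<in>UNIV. piref s b * (1 + 1/beta * A s b))"
      by (simp add: right_diff_distrib sum_subtractf)
    also have "\<dots> = 0" using eqp psum lin by simp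
    finally have z: "(\<Sum>b\<in>UNIV. piref s b * (exp (1/beta * A s b) - (1 + 1/beta * A s b))) = 0" .
    have nn: "\<forall>b\<in>UNIV. piref s b * (exp (1/beta * A s b) - (1 + 1/beta * A s b)) \<ge> 0"
    proof (intro ballI)
      fix b
      have "exp (1/beta * A s b) - (1 + 1/beta * A s b) \<ge> 0"
        using exp_ge_add_one_self[of "1/beta * A s b"] by linarith
      then show "piref s b * (exp (1/beta * A s b) - (1 + 1/beta * A s b)) \<ge> 0"
        using mult_nonneg_nonneg[OF less_imp_le[OF pos(3)[of b]]] by blast
    qed
    have "(\<Sum>b\<in>UNIV. piref s b * (exp (1/beta * A s b) - (1 + 1/beta * A s b))) = 0 \<longleftrightarrow>
        (\<forall>b\<in>UNIV. piref s b * (exp (1/beta * A s b) - (1 + 1/beta * A s b)) = 0)"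
      by (rule sum_nonneg_eq_0_iff[OF finite_UNIV]) (use nn in blast)
    then have "piref s a * (exp (1/beta * A s a) - (1 + 1/beta * A s a)) = 0"
      using z by blast
    then have "exp (1/beta * A s a) = 1 + 1/beta * A s a" using pos[of a] by simp
    then have "1/beta * A s a = 0" by (rule exp_eq_imp)
    then show "A s a = 0" using hbeta by simp
  qed
  ultimately show ?thesis by blast
qed

lemma gfun_nonpos: assumes pol: "is_policy pol" and A0: "\<forall>a. A s a = 0" shows "gfun pol s \<le> 0"
proof -
  have t: "pol s a * (A s a - beta * ln (pol s a / piref s a)) \<le> beta * (piref s a - pol s a)" for a
  proof -
    have pr: "piref s a > 0" using pr_pos by auto
    have "pol s a * ln (pol s a / piref s a) \<ge> pol s a - piref s a"
    proof (cases "pol s a = 0")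
      case True then show ?thesis using pr by simp
    next
      case False
      then have pp: "pol s a > 0" using pol_nn[OF pol, of s a] by simp
      have "ln (piref s a / pol s a) \<le> piref s a / pol s a - 1" using pp pr by (intro ln_le_minus_one) simp
      moreover have "ln (pol s a / piref s a) = - ln (piref s a / pol s a)" using pp pr by (simp add: ln_divide_pos)
      ultimately have "ln (pol s a / piref s a) \<ge> 1 - piref s a / pol s a" by simp
      then have "pol s a * ln (pol s a / piref s a) \<ge> pol s a * (1 - piref s a / pol s a)"
        using pp by (intro mult_left_mono) auto
      moreover have "pol s a * (1 - piref s a / pol s a) = pol s a - piref s a" using pp by (simp add: field_simps)
      ultimately show ?thesis by linarith
    qed
    then have "beta * (pol s a - piref s a) \<le> beta * (pol s a * ln (pol s a / piref s a))"
      using hbeta by (intro mult_left_mono) auto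
    then show ?thesis using A0 by (simp add: algebra_simps)
  qed
  have "gfun pol s \<le> (\<Sum>a\<in>UNIV. beta * (piref s a - pol s a))"
    unfolding gfun_def by (intro sum_mono t)
  also have "\<dots> = 0" using pol_sum[OF pr_pol, of s] pol_sum[OF pol, of s]
    by (simp add: sum_distrib_left[symmetric] sum_subtractf)
  finally show ?thesis .
qed

lemma Vmu_diff: assumes "is_policy pol"
  shows "Vreg_mu f T H r beta piref pol mu - Vreg_mu f T H r beta piref piref mu = visit_exp f T H pol mu (gfun pol)"
  unfolding Vreg_mu_def visit_exp_def Vreg_def
  by (simp add: PDL[OF assms order_refl reachH, symmetric] sum_subtractf right_diff_distrib)

end

theorem mainTheorem2:
  fixes f :: "'s::finite \<Rightarrow> 'a::finite \<Rightarrow> 's"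
    and Term :: "'s set" and H :: nat
    and r :: "'s \<Rightarrow> 'a \<Rightarrow> real" and beta :: real
    and mu nuS :: "'s \<Rightarrow> real"
    and piref nuA piplus :: "'s \<Rightarrow> 'a \<Rightarrow> real"
  assumes hterm: "terminates_within f Term H"
    and rew: "\<forall>s a. f s a \<notin> Term \<longrightarrow> r s a = 0"
    and hbeta: "beta > 0"
    and mu: "is_dist mu"
    and piref: "is_policy piref" "\<forall>s a. piref s a > 0"
    and nuS: "is_dist nuS" "\<forall>s. nuS s > 0"
    and nuA: "is_policy nuA" "\<forall>s a. nuA s a > 0"
    and piplus: "is_policy piplus" "\<forall>s a. piplus s a > 0"
    and piplus_min: "\<forall>pol. is_policy pol \<and> (\<forall>s a. pol s a > 0) \<longrightarrow>
           loss f Term H r beta piref nuS nuA piplus \<le> loss f Term H r beta piref nuS nuA pol"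
  shows "\<exists>lam :: 's \<Rightarrow> ('a \<Rightarrow> real) \<Rightarrow> real.
           (\<forall>s p. 0 \<le> lam s p) \<and>
           (let D = Vreg_mu f Term H r beta piref piplus mu - Vreg_mu f Term H r beta piref piref mu;
                E = visit_exp f Term H piplus mu (\<lambda>s. lam s (nuA s))
            in D \<ge> E \<and> E \<ge> 0 \<and>
               ((D = E \<and> E = 0) \<longleftrightarrow>
                (\<forall>pol. is_policy pol \<longrightarrow>
                   Vreg_mu f Term H r beta piref pol mu \<le> Vreg_mu f Term H r beta piref piref mu)))"
proof -
  interpret M: mdp f Term H r beta piref
    using hterm hbeta piref by unfold_locales auto
  define g where "g = M.gfun piplus"
  have SA: "g s \<ge> 0 \<and> (g s = 0 \<longrightarrow> (\<forall>a. M.A s a = 0))" if "s \<notin> Term" for s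
    unfolding g_def using M.state_analysis[OF piplus(2,1) nuS(2) piplus_min nuA(2) that] .
  have mu0: "mu s \<ge> 0" for s using mu unfolding is_dist_def by auto
  have ppnn: "piplus s a \<ge> 0" for s a using piplus(2) by (auto intro: less_imp_le)
  define lam :: "'s \<Rightarrow> ('a \<Rightarrow> real) \<Rightarrow> real" where "lam s p = max 0 (g s)" for s p
  define D where "D = Vreg_mu f Term H r beta piref piplus mu - Vreg_mu f Term H r beta piref piref mu"
  define E where "E = visit_exp f Term H piplus mu (\<lambda>s. lam s (nuA s))"
  have DE: "D = visit_exp f Term H piplus mu g" unfolding D_def g_def using M.Vmu_diff[OF piplus(1)] .
  have oc: "Occn f Term piplus (\<lambda>s. lam s (nuA s)) H s = Occn f Term piplus g H s" for s
    by (rule Occn_cong) (use SA in \<open>auto simp: lam_def\<close>)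
  have "E = visit_exp f Term H piplus mu g"
    unfolding E_def visit_exp_def oc ..
  then have DE2: "D = E" using DE by simp
  have Onn: "Occn f Term piplus g H s \<ge> 0" for s
    using Occn_nonneg[of Term g piplus] SA ppnn by blast
  have "visit_exp f Term H piplus mu g \<ge> 0" unfolding visit_exp_def
    by (intro sum_nonneg mult_nonneg_nonneg mu0 Onn)
  then have E0: "E \<ge> 0" using DE DE2 by simp
  have iff: "(D = E \<and> E = 0) \<longleftrightarrow> (\<forall>pol. is_policy pol \<longrightarrow>
                   Vreg_mu f Term H r beta piref pol mu \<le> Vreg_mu f Term H r beta piref piref mu)"
  proof
    assume "D = E \<and> E = 0"
    then have z: "(\<Sum>s\<in>UNIV. mu s * Occn f Term piplus g H s) = 0" using DE unfolding visit_exp_def by simp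
    have "\<forall>s\<in>UNIV. mu s * Occn f Term piplus g H s = 0"
    proof -
      have "(\<Sum>s\<in>UNIV. mu s * Occn f Term piplus g H s) = 0 \<longleftrightarrow> (\<forall>s\<in>UNIV. mu s * Occn f Term piplus g H s = 0)"
        by (rule sum_nonneg_eq_0_iff[OF finite_UNIV]) (use mu0 Onn in \<open>blast intro: mult_nonneg_nonneg\<close>)
      then show ?thesis using z by blast
    qed
    then have zs: "Occn f Term piplus g H s = 0" if "mu s > 0" for s
    proof -
      have "mu s * Occn f Term piplus g H s = 0" using \<open>\<forall>s\<in>UNIV. mu s * Occn f Term piplus g H s = 0\<close> by blast
      then show ?thesis using that by simp
    qed
    show "\<forall>pol. is_policy pol \<longrightarrow> Vreg_mu f Term H r beta piref pol mu \<le> Vreg_mu f Term H r beta piref piref mu"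
    proof (intro allI impI)
      fix pol :: "'s \<Rightarrow> 'a \<Rightarrow> real" assume pol: "is_policy pol"
      have "mu s * Occn f Term pol (M.gfun pol) H s \<le> 0" for s
      proof (cases "mu s > 0")
        case True
        have "Occn f Term pol (M.gfun pol) H s \<le> 0"
        proof (rule Occn_zero[of Term g piplus])
          show "\<And>s. s \<notin> Term \<Longrightarrow> 0 \<le> g s" using SA by blast
          show "\<And>s a. 0 < piplus s a" using piplus(2) by blast
          show "\<And>s. s \<notin> Term \<Longrightarrow> g s = 0 \<Longrightarrow> M.gfun pol s \<le> 0"
            using SA M.gfun_nonpos[OF pol] by blast
          show "\<And>s a. 0 \<le> pol s a" using M.pol_nn[OF pol] .
          show "Occn f Term piplus g H s = 0" using zs[OF True] .
        qed
        then show ?thesis using True by (simp add: mult_nonneg_nonpos)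
      next
        case False then have "mu s = 0" using mu0[of s] by simp
        then show ?thesis by simp
      qed
      then have "visit_exp f Term H pol mu (M.gfun pol) \<le> 0"
        unfolding visit_exp_def by (intro sum_nonpos) auto
      then show "Vreg_mu f Term H r beta piref pol mu \<le> Vreg_mu f Term H r beta piref piref mu"
        using M.Vmu_diff[OF pol, of mu] by simp
    qed
  next
    assume "\<forall>pol. is_policy pol \<longrightarrow> Vreg_mu f Term H r beta piref pol mu \<le> Vreg_mu f Term H r beta piref piref mu"
    then have "Vreg_mu f Term H r beta piref piplus mu \<le> Vreg_mu f Term H r beta piref piref mu"
      using piplus(1) by blast
    then have "D \<le> 0" unfolding D_def by simp
    then show "D = E \<and> E = 0" using DE2 E0 by simp
  qed
  have L: "\<forall>s p. 0 \<le> lam s p" unfolding lam_def by simp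
  have fin: "D \<ge> E \<and> E \<ge> 0 \<and> ((D = E \<and> E = 0) \<longleftrightarrow> (\<forall>pol. is_policy pol \<longrightarrow>
                   Vreg_mu f Term H r beta piref pol mu \<le> Vreg_mu f Term H r beta piref piref mu))"
  proof -
    have "E \<le> D" using DE2 by simp
    then show ?thesis using E0 iff by blast
  qed
  show ?thesis
    apply (rule exI[of _ lam])
    apply (rule conjI)
     apply (rule L)
    apply (unfold Let_def)
    apply (rule fin[unfolded D_def E_def])
    done
qed

end
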